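(* Let $0<p<0.1$. If indefinite growth occurs, then either the event $E$ occurs, or else there exists a good sequence $R_1,\dots,R_{n+1}$ of rectangles such that the event $G(R_1)\cap\bigcap_{i=1}^n D(R_i,R_{i+1})$ occurs.
   Context: Local bootstrap percolation on $\mathbb{Z}^2$ with parameter $p\in(0,1)$: sites are empty ($\circ$), occupied ($\bullet$) or active ($\star$). The initial configuration $\sigma$ has independent sites; the origin is $\star$ with probability $p$, else $\circ$; every other site is $\bullet$ with probability $p$, else $\circ$. Synchronous deterministic updates: each $\bullet$ becomes $\star$ if some $\star$ is within $\ell^1$-distance $2$; each $\circ$ becomes $\star$ if at least two $\star$'s are within $\ell^1$-distance $1$; other states are unchanged. Indefinite growth: every site eventually becomes active. Let $q=-\log(1-p)$, $A=\lceil 1/\sqrt q\rceil$, $B=\lfloor q^{-1}\log q^{-1}\rfloor$. A rectangle is a set $R=\{a,\dots,c\}\times\{b,\dots,d\}\subset\mathbb{Z}^2$, with dimensions $\dim(R)=(c-a+1,d-b+1)$; its columns are the sets $\{x\}\times\{b,\dots,d\}$, $a\le x\le c$, and rows are defined analogously. $R$ has a double gap in the columns (resp. rows) if two consecutive columns (resp. rows) of $R$ consist entirely of sites that are $\circ$ in the initial configuration $\sigma$. $G(R)$ is the event that $R$ has no double gap in the columns or rows. For rectangles $R=\{x_1,\dots,x_2\}\times\{y_1,\dots,y_2\}\subseteq R'=\{X_1,\dots,X_2\}\times\{Y_1,\dots,Y_2\}$, $D(R,R')$ is the event that each of the (possibly empty) rectangles $\{X_1,\dots,x_1-1\}\times\{Y_1,\dots,Y_2\}$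 and $\{x_2+1,\dots,X_2\}\times\{Y_1,\dots,Y_2\}$ has no double gap in the columns, and each of $\{X_1,\dots,X_2\}\times\{Y_1,\dots,y_1-1\}$ and $\{X_1,\dots,X_2\}\times\{y_2+1,\dots,Y_2\}$ has no double gap in the rows. $E$ is the union of the events $G(R)$ over all rectangles $R$ containing $0$ with one dimension in $[B-A-10,B-A]$ and the other in $[1,A]$. A sequence of rectangles $R_1,\dots,R_{n+1}$ ($n\ge1$) with $\dim(R_i)=(a_i,b_i)$, $s_i=a_{i+1}-a_i$, $t_i=b_{i+1}-b_i$ is good if: (i) $0\in R_1\subseteq R_2\subseteq\dots\subseteq R_{n+1}$; (ii) $\min(a_1,b_1)\in[A,A+3]$; (iii) $a_n+b_n\le B$; (iv) $a_{n+1}+b_{n+1}>B$; (v) for $i=1,\dots,n$, $s_i\ge a_i\sqrt q$ or $t_i\ge b_i\sqrt q$; (vi) for $i=1,\dots,n$, $s_i<a_i\sqrt q+4$ and $t_i<b_i\sqrt q+4$. *)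

theory Defs
  imports Complex_Main
begin

datatype state = Empty | Occupied | Active

type_synonym site = "int \<times> int"
type_synonym config = "site \<Rightarrow> state"

definition l1dist :: "site \<Rightarrow> site \<Rightarrow> int" where
  "l1dist u v = \<bar>fst u - fst v\<bar> + \<bar>snd u - snd v\<bar>"

definition step :: "config \<Rightarrow> config" where
  "step \<sigma> x = (case \<sigma> x of
      Occupied \<Rightarrow> (if \<exists>y. l1dist x y \<le> 2 \<and> \<sigma> y = Active then Active else Occupied)
    | Empty \<Rightarrow> (if card {y. l1dist x y \<le> 1 \<and> \<sigma> y = Active} \<ge> 2 then Active else Empty)
    | Active \<Rightarrow> Active)"

definition evolve :: "config \<Rightarrow> nat \<Rightarrow> config" where
  "evolve \<sigma> t = (step ^^ t) \<sigma>"

definition indefinite_growth :: "config \<Rightarrow> bool" where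
  "indefinite_growth \<sigma> \<longleftrightarrow> (\<forall>x. \<exists>t. evolve \<sigma> t x = Active)"

definition qpar :: "real \<Rightarrow> real" where "qpar p = - ln (1 - p)"
definition Apar :: "real \<Rightarrow> int" where "Apar p = \<lceil>1 / sqrt (qpar p)\<rceil>"
definition Bpar :: "real \<Rightarrow> int" where "Bpar p = \<lfloor>(1 / qpar p) * ln (1 / qpar p)\<rfloor>"

text \<open>A rectangle {x1..x2} x {y1..y2} is represented by its bounds (x1,x2,y1,y2);
  genuine (non-empty) rectangles satisfy x1 \<le> x2 and y1 \<le> y2.\<close>
type_synonym rect = "int \<times> int \<times> int \<times> int"

definition rect_set :: "rect \<Rightarrow> site set" where
  "rect_set R = (case R of (x1,x2,y1,y2) \<Rightarrow> {x1..x2} \<times> {y1..y2})"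

definition is_rect :: "rect \<Rightarrow> bool" where
  "is_rect R = (case R of (x1,x2,y1,y2) \<Rightarrow> x1 \<le> x2 \<and> y1 \<le> y2)"

definition width :: "rect \<Rightarrow> int" where
  "width R = (case R of (x1,x2,y1,y2) \<Rightarrow> x2 - x1 + 1)"
definition height :: "rect \<Rightarrow> int" where
  "height R = (case R of (x1,x2,y1,y2) \<Rightarrow> y2 - y1 + 1)"

definition dgap_cols :: "config \<Rightarrow> rect \<Rightarrow> bool" where
  "dgap_cols \<sigma> R = (case R of (x1,x2,y1,y2) \<Rightarrow>
     (\<exists>x. x1 \<le> x \<and> x + 1 \<le> x2 \<and>
        (\<forall>y\<in>{y1..y2}. \<sigma> (x,y) = Empty \<and> \<sigma> (x+1,y) = Empty)))"

definition dgap_rows :: "config \<Rightarrow> rect \<Rightarrow> bool" where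
  "dgap_rows \<sigma> R = (case R of (x1,x2,y1,y2) \<Rightarrow>
     (\<exists>y. y1 \<le> y \<and> y + 1 \<le> y2 \<and>
        (\<forall>x\<in>{x1..x2}. \<sigma> (x,y) = Empty \<and> \<sigma> (x,y+1) = Empty)))"

definition Gev :: "config \<Rightarrow> rect \<Rightarrow> bool" where
  "Gev \<sigma> R \<longleftrightarrow> \<not> dgap_cols \<sigma> R \<and> \<not> dgap_rows \<sigma> R"

definition Dev :: "config \<Rightarrow> rect \<Rightarrow> rect \<Rightarrow> bool" where
  "Dev \<sigma> R R' = (case R of (x1,x2,y1,y2) \<Rightarrow> case R' of (X1,X2,Y1,Y2) \<Rightarrow>
      \<not> dgap_cols \<sigma> (X1, x1 - 1, Y1, Y2) \<and> \<not> dgap_cols \<sigma> (x2 + 1, X2, Y1, Y2) \<and>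
      \<not> dgap_rows \<sigma> (X1, X2, Y1, y1 - 1) \<and> \<not> dgap_rows \<sigma> (X1, X2, y2 + 1, Y2))"

definition Eev :: "real \<Rightarrow> config \<Rightarrow> bool" where
  "Eev p \<sigma> \<longleftrightarrow> (\<exists>R. is_rect R \<and> (0,0) \<in> rect_set R \<and>
     ((width R \<in> {Bpar p - Apar p - 10 .. Bpar p - Apar p} \<and> height R \<in> {1 .. Apar p}) \<or>
      (height R \<in> {Bpar p - Apar p - 10 .. Bpar p - Apar p} \<and> width R \<in> {1 .. Apar p})) \<and>
     Gev \<sigma> R)"

definition good_seq :: "real \<Rightarrow> nat \<Rightarrow> (nat \<Rightarrow> rect) \<Rightarrow> bool" where
  "good_seq p n R \<longleftrightarrow> n \<ge> 1 \<and>
     (\<forall>i\<in>{1..n+1}. is_rect (R i)) \<and>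
     (0,0) \<in> rect_set (R 1) \<and>
     (\<forall>i\<in>{1..n}. rect_set (R i) \<subseteq> rect_set (R (Suc i))) \<and>
     min (width (R 1)) (height (R 1)) \<in> {Apar p .. Apar p + 3} \<and>
     width (R n) + height (R n) \<le> Bpar p \<and>
     width (R (Suc n)) + height (R (Suc n)) > Bpar p \<and>
     (\<forall>i\<in>{1..n}.
        let a = real_of_int (width (R i)); b = real_of_int (height (R i));
            s = real_of_int (width (R (Suc i)) - width (R i));
            t = real_of_int (height (R (Suc i)) - height (R i)) in
        (s \<ge> a * sqrt (qpar p) \<or> t \<ge> b * sqrt (qpar p)) \<and>
        s < a * sqrt (qpar p) + 4 \<and> t < b * sqrt (qpar p) + 4)"

end

theory Submission
  imports Defs
begin

fun move :: "config \<Rightarrow> rect \<Rightarrow> rect \<Rightarrow> bool" where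
"move \<sigma> (x1,x2,y1,y2) R' = (
 (R' = (x1,x2+1,y1,y2) \<and> (\<exists>y\<in>{y1..y2}. \<sigma>(x2+1,y)\<noteq>Empty \<or> \<sigma>(x2+2,y)\<noteq>Empty)) \<or>
 (R' = (x1-1,x2,y1,y2) \<and> (\<exists>y\<in>{y1..y2}. \<sigma>(x1-1,y)\<noteq>Empty \<or> \<sigma>(x1-2,y)\<noteq>Empty)) \<or>
 (R' = (x1,x2,y1,y2+1) \<and> (\<exists>x\<in>{x1..x2}. \<sigma>(x,y2+1)\<noteq>Empty \<or> \<sigma>(x,y2+2)\<noteq>Empty)) \<or>
 (R' = (x1,x2,y1-1,y2) \<and> (\<exists>x\<in>{x1..x2}. \<sigma>(x,y1-1)\<noteq>Empty \<or> \<sigma>(x,y1-2)\<noteq>Empty)) \<or>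
 (R' = (x1,x2+1,y1,y2+1) \<and> \<sigma>(x2+1,y2+1)\<noteq>Empty) \<or>
 (R' = (x1-1,x2,y1,y2+1) \<and> \<sigma>(x1-1,y2+1)\<noteq>Empty) \<or>
 (R' = (x1,x2+1,y1-1,y2) \<and> \<sigma>(x2+1,y1-1)\<noteq>Empty) \<or>
 (R' = (x1-1,x2,y1-1,y2) \<and> \<sigma>(x1-1,y1-1)\<noteq>Empty))"

lemma near_empty:
  assumes nm: "\<not> (\<exists>R'. move \<sigma> (x1,x2,y1,y2) R')"
    and z: "(a,b) \<notin> {x1..x2} \<times> {y1..y2}" and y: "(c,d) \<in> {x1..x2} \<times> {y1..y2}"
    and dist: "l1dist (a,b) (c,d) \<le> 2"
  shows "\<sigma> (a,b) = Empty"
proof -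
  have R: "\<forall>y\<in>{y1..y2}. \<sigma>(x2+1,y)=Empty \<and> \<sigma>(x2+2,y)=Empty"
    proof - have "\<not> move \<sigma> (x1,x2,y1,y2) (x1,x2+1,y1,y2)" using nm by blast then show ?thesis by auto qed
  have L: "\<forall>y\<in>{y1..y2}. \<sigma>(x1-1,y)=Empty \<and> \<sigma>(x1-2,y)=Empty"
    proof - have "\<not> move \<sigma> (x1,x2,y1,y2) (x1-1,x2,y1,y2)" using nm by blast then show ?thesis by auto qed
  have U: "\<forall>x\<in>{x1..x2}. \<sigma>(x,y2+1)=Empty \<and> \<sigma>(x,y2+2)=Empty"
    proof - have "\<not> move \<sigma> (x1,x2,y1,y2) (x1,x2,y1,y2+1)" using nm by blast then show ?thesis by auto qed
  have D: "\<forall>x\<in>{x1..x2}. \<sigma>(x,y1-1)=Empty \<and> \<sigma>(x,y1-2)=Empty"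
    proof - have "\<not> move \<sigma> (x1,x2,y1,y2) (x1,x2,y1-1,y2)" using nm by blast then show ?thesis by auto qed
  have C1: "\<sigma>(x2+1,y2+1)=Empty" proof - have "\<not> move \<sigma> (x1,x2,y1,y2) (x1,x2+1,y1,y2+1)" using nm by blast then show ?thesis by auto qed
  have C2: "\<sigma>(x1-1,y2+1)=Empty" proof - have "\<not> move \<sigma> (x1,x2,y1,y2) (x1-1,x2,y1,y2+1)" using nm by blast then show ?thesis by auto qed
  have C3: "\<sigma>(x2+1,y1-1)=Empty" proof - have "\<not> move \<sigma> (x1,x2,y1,y2) (x1,x2+1,y1-1,y2)" using nm by blast then show ?thesis by auto qed
  have C4: "\<sigma>(x1-1,y1-1)=Empty" proof - have "\<not> move \<sigma> (x1,x2,y1,y2) (x1-1,x2,y1-1,y2)" using nm by blast then show ?thesis by auto qed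
  have d: "\<bar>a-c\<bar> + \<bar>b-d\<bar> \<le> 2" using dist by (simp add: l1dist_def)
  have cy: "x1 \<le> c" "c \<le> x2" "y1 \<le> d" "d \<le> y2" using y by auto
  consider "a > x2" | "a < x1" | "x1 \<le> a \<and> a \<le> x2" by linarith
  then show ?thesis
  proof cases
    case 1
    consider "b > y2" | "b < y1" | "y1 \<le> b \<and> b \<le> y2" by linarith
    then show ?thesis
    proof cases
      case 1 then have "a = x2+1" "b = y2+1" using \<open>a > x2\<close> d cy by auto
      then show ?thesis using C1 by simp
    next
      case 2 then have "a = x2+1" "b = y1-1" using \<open>a > x2\<close> d cy by auto
      then show ?thesis using C3 by simp
    next
      case 3 then have "a = x2+1 \<or> a = x2+2" using \<open>a > x2\<close> d cy by auto
      then show ?thesis using R 3 by auto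
    qed
  next
    case 2
    consider "b > y2" | "b < y1" | "y1 \<le> b \<and> b \<le> y2" by linarith
    then show ?thesis
    proof cases
      case 1 then have "a = x1-1" "b = y2+1" using \<open>a < x1\<close> d cy by auto
      then show ?thesis using C2 by simp
    next
      case 2 then have "a = x1-1" "b = y1-1" using \<open>a < x1\<close> d cy by auto
      then show ?thesis using C4 by simp
    next
      case 3 then have "a = x1-1 \<or> a = x1-2" using \<open>a < x1\<close> d cy by auto
      then show ?thesis using L 3 by auto
    qed
  next
    case 3
    then have "b > y2 \<or> b < y1" using z by auto
    then show ?thesis
    proof
      assume "b > y2" then have "b = y2+1 \<or> b = y2+2" using d cy by auto
      then show ?thesis using U 3 by auto
    next
      assume "b < y1" then have "b = y1-1 \<or> b = y1-2" using d cy by auto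
      then show ?thesis using D 3 by auto
    qed
  qed
qed

lemma evolve_Suc: "evolve \<sigma> (Suc t) = step (evolve \<sigma> t)"
  by (simp add: evolve_def)

lemma two_elems:
  assumes "card S \<ge> 2" shows "\<exists>u v. u \<in> S \<and> v \<in> S \<and> u \<noteq> v"
proof -
  have "finite S" using assms by (metis card.infinite not_numeral_le_zero)
  then show ?thesis using assms card_le_Suc0_iff_eq[of S] by auto
qed

lemma confine:
  assumes nm: "\<not> (\<exists>R'. move \<sigma> (x1,x2,y1,y2) R')"
    and na: "\<forall>z. z \<notin> {x1..x2} \<times> {y1..y2} \<longrightarrow> \<sigma> z \<noteq> Active"
  shows "\<forall>z. z \<notin> {x1..x2} \<times> {y1..y2} \<longrightarrow> evolve \<sigma> t z = \<sigma> z"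
proof (induction t)
  case 0 then show ?case by (simp add: evolve_def)
next
  case (Suc t)
  let ?s = "evolve \<sigma> t"
  show ?case
  proof (intro allI impI)
    fix z assume zR: "z \<notin> {x1..x2} \<times> {y1..y2}"
    have sz: "?s z = \<sigma> z" using Suc.IH zR by blast
    have actR: "?s y = Active \<Longrightarrow> y \<in> {x1..x2} \<times> {y1..y2}" for y
      using Suc.IH na by metis
    obtain a b where zab: "z = (a,b)" by fastforce
    show "evolve \<sigma> (Suc t) z = \<sigma> z"
    proof (cases "\<sigma> z")
      case Empty
      have "\<not> card {y. l1dist z y \<le> 1 \<and> ?s y = Active} \<ge> 2"
      proof
        assume "card {y. l1dist z y \<le> 1 \<and> ?s y = Active} \<ge> 2"
        then obtain u v where uv: "l1dist z u \<le> 1" "?s u = Active" "l1dist z v \<le> 1" "?s v = Active" "u \<noteq> v"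
          using two_elems by blast
        obtain c d where u: "u = (c,d)" by fastforce
        obtain e f where v: "v = (e,f)" by fastforce
        have "u \<in> {x1..x2} \<times> {y1..y2}" "v \<in> {x1..x2} \<times> {y1..y2}" using actR uv by auto
        then show False using uv zR u v zab by (auto simp: l1dist_def)
      qed
      then show ?thesis using Empty sz by (simp add: evolve_Suc step_def)
    next
      case Occupied
      have "\<not> (\<exists>y. l1dist z y \<le> 2 \<and> ?s y = Active)"
      proof
        assume "\<exists>y. l1dist z y \<le> 2 \<and> ?s y = Active"
        then obtain y where y: "l1dist z y \<le> 2" "?s y = Active" by blast
        obtain c d where ycd: "y = (c,d)" by fastforce
        have "y \<in> {x1..x2} \<times> {y1..y2}" using actR y by auto
        then have "\<sigma> z = Empty" using near_empty[OF nm, of a b c d] zR y zab ycd by auto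
        then show False using Occupied by simp
      qed
      then show ?thesis using Occupied sz by (simp add: evolve_Suc step_def)
    next
      case Active then show ?thesis using na zR by auto
    qed
  qed
qed

declare move.simps[simp del]

lemma move_cases:
  assumes "move \<sigma> (x1,x2,y1,y2) R'"
  shows "R' = (x1,x2+1,y1,y2) \<or> R' = (x1-1,x2,y1,y2) \<or> R' = (x1,x2,y1,y2+1) \<or> R' = (x1,x2,y1-1,y2) \<or>
    R' = (x1,x2+1,y1,y2+1) \<or> R' = (x1-1,x2,y1,y2+1) \<or> R' = (x1,x2+1,y1-1,y2) \<or> R' = (x1-1,x2,y1-1,y2)"
  using assms by (simp only: move.simps) (elim disjE conjE; simp only: simp_thms)

lemma move_props:
  assumes "is_rect R" "move \<sigma> R R'"
  shows "is_rect R' \<and> rect_set R \<subseteq> rect_set R' \<and> width R' - width R \<in> {0,1} \<and>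
     height R' - height R \<in> {0,1} \<and> width R' + height R' > width R + height R"
proof -
  obtain x1 x2 y1 y2 where R: "R = (x1,x2,y1,y2)" by (cases R) auto
  have r: "x1 \<le> x2" "y1 \<le> y2" using assms(1) R by (auto simp: is_rect_def)
  have m: "move \<sigma> (x1,x2,y1,y2) R'" using assms(2) unfolding R .
  from move_cases[OF m] show ?thesis unfolding R using r
    by (elim disjE; simp add: is_rect_def rect_set_def width_def height_def; fastforce)
qed

lemma ex_move:
  assumes ig: "indefinite_growth \<sigma>" and na: "\<forall>x. x \<noteq> (0,0) \<longrightarrow> \<sigma> x \<noteq> Active"
    and "is_rect R" "(0,0) \<in> rect_set R"
  shows "\<exists>R'. move \<sigma> R R'"
proof (rule ccontr)
  assume nm: "\<not> (\<exists>R'. move \<sigma> R R')"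
  obtain x1 x2 y1 y2 where R: "R = (x1,x2,y1,y2)" by (cases R) auto
  have o: "(0,0) \<in> {x1..x2} \<times> {y1..y2}" using assms(4) R by (simp add: rect_set_def)
  have na': "\<forall>z. z \<notin> {x1..x2} \<times> {y1..y2} \<longrightarrow> \<sigma> z \<noteq> Active" using na o by auto
  have nm': "\<not> (\<exists>R'. move \<sigma> (x1,x2,y1,y2) R')" using nm R by simp
  let ?z = "(x2+1, y1)"
  have zn: "?z \<notin> {x1..x2} \<times> {y1..y2}" by auto
  obtain t where "evolve \<sigma> t ?z = Active" using ig by (auto simp: indefinite_growth_def)
  moreover have "evolve \<sigma> t ?z = \<sigma> ?z" using confine[OF nm' na'] zn by blast
  ultimately show False using na' zn by simp
qed

primrec chain :: "config \<Rightarrow> nat \<Rightarrow> rect" where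
  "chain \<sigma> 0 = (0,0,0,0)"
| "chain \<sigma> (Suc j) = (SOME R'. move \<sigma> (chain \<sigma> j) R')"

lemma chain_props:
  assumes ig: "indefinite_growth \<sigma>" and na: "\<forall>x. x \<noteq> (0,0) \<longrightarrow> \<sigma> x \<noteq> Active"
  shows "is_rect (chain \<sigma> j) \<and> (0,0) \<in> rect_set (chain \<sigma> j) \<and> move \<sigma> (chain \<sigma> j) (chain \<sigma> (Suc j))"
proof (induction j)
  case 0
  have "\<exists>R'. move \<sigma> (chain \<sigma> 0) R'"
    by (rule ex_move[OF ig na]) (auto simp: is_rect_def rect_set_def)
  then show ?case by (auto simp: is_rect_def rect_set_def intro: someI_ex)
next
  case (Suc j)
  have mp: "is_rect (chain \<sigma> (Suc j)) \<and> rect_set (chain \<sigma> j) \<subseteq> rect_set (chain \<sigma> (Suc j))"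
    using move_props Suc by blast
  then have o: "(0,0) \<in> rect_set (chain \<sigma> (Suc j))" using Suc by blast
  have "\<exists>R'. move \<sigma> (chain \<sigma> (Suc j)) R'" using ex_move[OF ig na] mp o by blast
  then have "move \<sigma> (chain \<sigma> (Suc j)) (chain \<sigma> (Suc (Suc j)))"
    by (simp only: chain.simps(2)) (rule someI_ex)
  then show ?case using mp o by blast
qed

fun inv_all :: "config \<Rightarrow> rect \<Rightarrow> rect \<Rightarrow> bool" where
"inv_all \<sigma> (x1,x2,y1,y2) (X1,X2,Y1,Y2) = (
 (\<forall>c. x2+1 \<le> c \<and> c \<le> X2 \<longrightarrow> (\<exists>y\<in>{Y1..Y2}. \<sigma>(c,y)\<noteq>Empty \<or> \<sigma>(c+1,y)\<noteq>Empty)) \<and>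
 (\<forall>c. X1 \<le> c \<and> c \<le> x1-1 \<longrightarrow> (\<exists>y\<in>{Y1..Y2}. \<sigma>(c,y)\<noteq>Empty \<or> \<sigma>(c-1,y)\<noteq>Empty)) \<and>
 (\<forall>r. y2+1 \<le> r \<and> r \<le> Y2 \<longrightarrow> (\<exists>x\<in>{X1..X2}. \<sigma>(x,r)\<noteq>Empty \<or> \<sigma>(x,r+1)\<noteq>Empty)) \<and>
 (\<forall>r. Y1 \<le> r \<and> r \<le> y1-1 \<longrightarrow> (\<exists>x\<in>{X1..X2}. \<sigma>(x,r)\<noteq>Empty \<or> \<sigma>(x,r-1)\<noteq>Empty)))"

lemma inv_refl: "inv_all \<sigma> R R"
  by (cases R) auto

lemma ex_mono: "\<exists>x\<in>{a..b::int}. P x \<Longrightarrow> a' \<le> a \<Longrightarrow> b \<le> b' \<Longrightarrow> \<exists>x\<in>{a'..b'}. P x"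
  by (meson atLeastAtMost_iff order_trans)

lemma inv_step:
  assumes "inv_all \<sigma> R R'" "move \<sigma> R' R''" "is_rect R'"
  shows "inv_all \<sigma> R R''"
proof -
  obtain x1 x2 y1 y2 where R: "R = (x1,x2,y1,y2)" by (cases R) auto
  obtain X1 X2 Y1 Y2 where R': "R' = (X1,X2,Y1,Y2)" by (cases R') auto
  have I: "inv_all \<sigma> (x1,x2,y1,y2) (X1,X2,Y1,Y2)" using assms R R' by simp
  have rr: "X1 \<le> X2" "Y1 \<le> Y2" using assms(3) R' by (auto simp: is_rect_def)
  have M: "move \<sigma> (X1,X2,Y1,Y2) R''" using assms R' by simp
  note I1 = I[simplified, THEN conjunct1, rule_format]
  note I2 = I[simplified, THEN conjunct2, THEN conjunct1, rule_format]
  note I3 = I[simplified, THEN conjunct2, THEN conjunct2, THEN conjunct1, rule_format]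
  note I4 = I[simplified, THEN conjunct2, THEN conjunct2, THEN conjunct2, rule_format]
  have c0: "inv_all \<sigma> (x1,x2,y1,y2) (X1, X2 + 1, Y1, Y2)" if j: "\<exists>y\<in>{Y1..Y2}. \<sigma> (X2 + 1, y) \<noteq> Empty \<or> \<sigma> (X2 + 2, y) \<noteq> Empty"
    apply (simp only: inv_all.simps)
    apply (intro conjI allI impI)
    subgoal for c apply (cases "c = X2+1") subgoal using j by (auto simp: algebra_simps) subgoal using I1[of c] by auto done
    subgoal for c using I2[of c] by auto
    subgoal for r using I3[of r] by auto
    subgoal for r using I4[of r] by auto
    done
  have c1: "inv_all \<sigma> (x1,x2,y1,y2) (X1 - 1, X2, Y1, Y2)" if j: "\<exists>y\<in>{Y1..Y2}. \<sigma> (X1 - 1, y) \<noteq> Empty \<or> \<sigma> (X1 - 2, y) \<noteq> Empty"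
    apply (simp only: inv_all.simps)
    apply (intro conjI allI impI)
    subgoal for c using I1[of c] by auto
    subgoal for c apply (cases "c = X1-1") subgoal using j by (auto simp: algebra_simps) subgoal using I2[of c] by auto done
    subgoal for r using I3[of r] by auto
    subgoal for r using I4[of r] by auto
    done
  have c2: "inv_all \<sigma> (x1,x2,y1,y2) (X1, X2, Y1, Y2 + 1)" if j: "\<exists>x\<in>{X1..X2}. \<sigma> (x, Y2 + 1) \<noteq> Empty \<or> \<sigma> (x, Y2 + 2) \<noteq> Empty"
    apply (simp only: inv_all.simps)
    apply (intro conjI allI impI)
    subgoal for c using I1[of c] by auto
    subgoal for c using I2[of c] by auto
    subgoal for r apply (cases "r = Y2+1") subgoal using j by (auto simp: algebra_simps) subgoal using I3[of r] by auto done
    subgoal for r using I4[of r] by auto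
    done
  have c3: "inv_all \<sigma> (x1,x2,y1,y2) (X1, X2, Y1 - 1, Y2)" if j: "\<exists>x\<in>{X1..X2}. \<sigma> (x, Y1 - 1) \<noteq> Empty \<or> \<sigma> (x, Y1 - 2) \<noteq> Empty"
    apply (simp only: inv_all.simps)
    apply (intro conjI allI impI)
    subgoal for c using I1[of c] by auto
    subgoal for c using I2[of c] by auto
    subgoal for r using I3[of r] by auto
    subgoal for r apply (cases "r = Y1-1") subgoal using j by (auto simp: algebra_simps) subgoal using I4[of r] by auto done
    done
  have c4: "inv_all \<sigma> (x1,x2,y1,y2) (X1, X2 + 1, Y1, Y2 + 1)" if j: "\<sigma> (X2 + 1, Y2 + 1) \<noteq> Empty"
    apply (simp only: inv_all.simps)
    apply (intro conjI allI impI)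
    subgoal for c apply (cases "c = X2+1") subgoal using j rr by (auto simp: algebra_simps intro!: bexI[where x="Y2+1"]) subgoal using I1[of c] by auto done
    subgoal for c using I2[of c] by auto
    subgoal for r apply (cases "r = Y2+1") subgoal using j rr by (auto simp: algebra_simps intro!: bexI[where x="X2+1"]) subgoal using I3[of r] by auto done
    subgoal for r using I4[of r] by auto
    done
  have c5: "inv_all \<sigma> (x1,x2,y1,y2) (X1 - 1, X2, Y1, Y2 + 1)" if j: "\<sigma> (X1 - 1, Y2 + 1) \<noteq> Empty"
    apply (simp only: inv_all.simps)
    apply (intro conjI allI impI)
    subgoal for c using I1[of c] by auto
    subgoal for c apply (cases "c = X1-1") subgoal using j rr by (auto simp: algebra_simps intro!: bexI[where x="Y2+1"]) subgoal using I2[of c] by auto done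
    subgoal for r apply (cases "r = Y2+1") subgoal using j rr by (auto simp: algebra_simps intro!: bexI[where x="X1-1"]) subgoal using I3[of r] by auto done
    subgoal for r using I4[of r] by auto
    done
  have c6: "inv_all \<sigma> (x1,x2,y1,y2) (X1, X2 + 1, Y1 - 1, Y2)" if j: "\<sigma> (X2 + 1, Y1 - 1) \<noteq> Empty"
    apply (simp only: inv_all.simps)
    apply (intro conjI allI impI)
    subgoal for c apply (cases "c = X2+1") subgoal using j rr by (auto simp: algebra_simps intro!: bexI[where x="Y1-1"]) subgoal using I1[of c] by auto done
    subgoal for c using I2[of c] by auto
    subgoal for r using I3[of r] by auto
    subgoal for r apply (cases "r = Y1-1") subgoal using j rr by (auto simp: algebra_simps intro!: bexI[where x="X2+1"]) subgoal using I4[of r] by auto done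
    done
  have c7: "inv_all \<sigma> (x1,x2,y1,y2) (X1 - 1, X2, Y1 - 1, Y2)" if j: "\<sigma> (X1 - 1, Y1 - 1) \<noteq> Empty"
    apply (simp only: inv_all.simps)
    apply (intro conjI allI impI)
    subgoal for c using I1[of c] by auto
    subgoal for c apply (cases "c = X1-1") subgoal using j rr by (auto simp: algebra_simps intro!: bexI[where x="Y1-1"]) subgoal using I2[of c] by auto done
    subgoal for r using I3[of r] by auto
    subgoal for r apply (cases "r = Y1-1") subgoal using j rr by (auto simp: algebra_simps intro!: bexI[where x="X1-1"]) subgoal using I4[of r] by auto done
    done
  have "inv_all \<sigma> (x1,x2,y1,y2) R''" using M
    apply (simp only: move.simps)
    apply (elim disjE conjE)
    using c0 c1 c2 c3 c4 c5 c6 c7 by simp_all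
  then show ?thesis using R by simp
qed

lemma inv_Dev:
  assumes I: "inv_all \<sigma> R R'" shows "Dev \<sigma> R R'"
proof -
  obtain x1 x2 y1 y2 where R: "R = (x1,x2,y1,y2)" by (cases R) auto
  obtain X1 X2 Y1 Y2 where R': "R' = (X1,X2,Y1,Y2)" by (cases R') auto
  have I': "inv_all \<sigma> (x1,x2,y1,y2) (X1,X2,Y1,Y2)" using I R R' by simp
  note I1 = I'[simplified, THEN conjunct1, rule_format]
  note I2 = I'[simplified, THEN conjunct2, THEN conjunct1, rule_format]
  note I3 = I'[simplified, THEN conjunct2, THEN conjunct2, THEN conjunct1, rule_format]
  note I4 = I'[simplified, THEN conjunct2, THEN conjunct2, THEN conjunct2, rule_format]
  have a: "\<not> dgap_cols \<sigma> (X1, x1 - 1, Y1, Y2)"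
  proof
    assume "dgap_cols \<sigma> (X1, x1 - 1, Y1, Y2)"
    then obtain x where x: "X1 \<le> x" "x+1 \<le> x1 - 1" "\<forall>y\<in>{Y1..Y2}. \<sigma>(x,y) = Empty \<and> \<sigma>(x+1,y) = Empty"
      by (auto simp: dgap_cols_def)
    show False using I2[of "x+1"] x by auto
  qed
  have b: "\<not> dgap_cols \<sigma> (x2 + 1, X2, Y1, Y2)"
  proof
    assume "dgap_cols \<sigma> (x2+1, X2, Y1, Y2)"
    then obtain x where x: "x2+1 \<le> x" "x+1 \<le> X2" "\<forall>y\<in>{Y1..Y2}. \<sigma>(x,y) = Empty \<and> \<sigma>(x+1,y) = Empty"
      by (auto simp: dgap_cols_def)
    show False using I1[of "x"] x by auto
  qed
  have c: "\<not> dgap_rows \<sigma> (X1, X2, Y1, y1 - 1)"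
  proof
    assume "dgap_rows \<sigma> (X1, X2, Y1, y1 - 1)"
    then obtain y where y: "Y1 \<le> y" "y+1 \<le> y1 - 1" "\<forall>x\<in>{X1..X2}. \<sigma>(x,y) = Empty \<and> \<sigma>(x,y+1) = Empty"
      by (auto simp: dgap_rows_def)
    show False using I4[of "y+1"] y by auto
  qed
  have d: "\<not> dgap_rows \<sigma> (X1, X2, y2 + 1, Y2)"
  proof
    assume "dgap_rows \<sigma> (X1, X2, y2+1, Y2)"
    then obtain y where y: "y2+1 \<le> y" "y+1 \<le> Y2" "\<forall>x\<in>{X1..X2}. \<sigma>(x,y) = Empty \<and> \<sigma>(x,y+1) = Empty"
      by (auto simp: dgap_rows_def)
    show False using I3[of "y"] y by auto
  qed
  show ?thesis using a b c d R R' by (simp add: Dev_def)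
qed

lemma inv_Gev:
  assumes I: "inv_all \<sigma> (0,0,0,0) R" and o: "\<sigma> (0,0) \<noteq> Empty" and oR: "(0,0) \<in> rect_set R"
  shows "Gev \<sigma> R"
proof -
  obtain X1 X2 Y1 Y2 where R': "R = (X1,X2,Y1,Y2)" by (cases R) auto
  have I': "inv_all \<sigma> (0,0,0,0) (X1,X2,Y1,Y2)" using I R' by simp
  have bx: "X1 \<le> 0" "0 \<le> X2" "Y1 \<le> 0" "0 \<le> Y2" using oR R' by (auto simp: rect_set_def)
  note I1 = I'[simplified, THEN conjunct1, rule_format]
  note I2 = I'[simplified, THEN conjunct2, THEN conjunct1, rule_format]
  note I3 = I'[simplified, THEN conjunct2, THEN conjunct2, THEN conjunct1, rule_format]
  note I4 = I'[simplified, THEN conjunct2, THEN conjunct2, THEN conjunct2, rule_format]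
  have a: "\<not> dgap_cols \<sigma> (X1, X2, Y1, Y2)"
  proof
    assume "dgap_cols \<sigma> (X1, X2, Y1, Y2)"
    then obtain x where x: "X1 \<le> x" "x+1 \<le> X2" "\<forall>y\<in>{Y1..Y2}. \<sigma>(x,y) = Empty \<and> \<sigma>(x+1,y) = Empty"
      by (auto simp: dgap_cols_def)
    have "x \<ge> 1 \<or> x + 1 \<le> -1 \<or> x = 0 \<or> x = -1" by linarith
    then show False
    proof (elim disjE)
      assume "x \<ge> 1" then show False using I1[of x] x by auto
    next
      assume "x + 1 \<le> -1" then show False using I2[of "x+1"] x by auto
    next
      assume "x = 0" then show False using x(3) bx o by auto
    next
      assume "x = -1" then show False using x(3) bx o by auto
    qed
  qed
  have b: "\<not> dgap_rows \<sigma> (X1, X2, Y1, Y2)"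
  proof
    assume "dgap_rows \<sigma> (X1, X2, Y1, Y2)"
    then obtain y where y: "Y1 \<le> y" "y+1 \<le> Y2" "\<forall>x\<in>{X1..X2}. \<sigma>(x,y) = Empty \<and> \<sigma>(x,y+1) = Empty"
      by (auto simp: dgap_rows_def)
    have "y \<ge> 1 \<or> y + 1 \<le> -1 \<or> y = 0 \<or> y = -1" by linarith
    then show False
    proof (elim disjE)
      assume "y \<ge> 1" then show False using I3[of y] y by auto
    next
      assume "y + 1 \<le> -1" then show False using I4[of "y+1"] y by auto
    next
      assume "y = 0" then show False using y(3) bx o by auto
    next
      assume "y = -1" then show False using y(3) bx o by auto
    qed
  qed
  show ?thesis using a b R' by (simp add: Gev_def)
qed

lemma ivt:
  fixes f :: "nat \<Rightarrow> int"
  assumes st: "\<forall>j. f (Suc j) - f j \<in> {0,1}" and "f 0 \<le> v" "v \<le> f m"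
  shows "\<exists>j\<le>m. f j = v"
  using assms(3)
proof (induction m)
  case 0 then show ?case using assms(2) by auto
next
  case (Suc m)
  show ?case
  proof (cases "v \<le> f m")
    case True then show ?thesis using Suc.IH by (meson le_Suc_eq)
  next
    case False
    then have "f (Suc m) = v" using st[rule_format, of m] Suc.prems by auto
    then show ?thesis by blast
  qed
qed

lemma steps_mono:
  fixes f :: "nat \<Rightarrow> int"
  assumes st: "\<forall>j. f (Suc j) - f j \<in> {0,1}" and "j \<le> m"
  shows "f j \<le> f m"
  using assms(2)
proof (induction m)
  case 0 then show ?case by simp
next
  case (Suc m)
  have "f m \<le> f (Suc m)" using st[rule_format, of m] by auto
  then show ?case using Suc by (metis le_Suc_eq order_trans order_refl)
qed

lemma greedy:
  fixes S :: "nat \<Rightarrow> int" and B :: int and Q :: "nat \<Rightarrow> nat \<Rightarrow> bool"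
  assumes st: "\<And>k. S k \<le> B \<Longrightarrow> \<exists>k'>k. Q k k' \<and> S k < S k'"
  shows "S k \<le> B \<Longrightarrow> \<exists>n idx. n \<ge> 1 \<and> idx (1::nat) = k \<and>
     (\<forall>i\<in>{1..n}. idx i < idx (Suc i) \<and> Q (idx i) (idx (Suc i))) \<and>
     S (idx n) \<le> B \<and> S (idx (Suc n)) > B"
proof (induction "nat (B - S k + 1)" arbitrary: k rule: less_induct)
  case less
  obtain k' where k': "k' > k" "Q k k'" "S k < S k'" using st less.prems by blast
  show ?case
  proof (cases "S k' \<le> B")
    case False
    let ?idx = "\<lambda>i::nat. if i \<le> 1 then k else k'"
    have "(\<forall>i\<in>{1..1}. ?idx i < ?idx (Suc i) \<and> Q (?idx i) (?idx (Suc i)))" using k' by auto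
    moreover have "S (?idx 1) \<le> B \<and> S (?idx (Suc 1)) > B" using False less.prems by auto
    ultimately show ?thesis by (intro exI[of _ 1] exI[of _ ?idx]) auto
  next
    case True
    have "nat (B - S k' + 1) < nat (B - S k + 1)" using True k' by simp
    from less.hyps[OF this True] obtain n idx where H: "n \<ge> 1" "idx (1::nat) = k'"
      "\<forall>i\<in>{1..n}. idx i < idx (Suc i) \<and> Q (idx i) (idx (Suc i))"
      "S (idx n) \<le> B" "S (idx (Suc n)) > B" by blast
    let ?idx = "\<lambda>i::nat. if i \<le> 1 then k else idx (i - 1)"
    have "\<forall>i\<in>{1..n+1}. ?idx i < ?idx (Suc i) \<and> Q (?idx i) (?idx (Suc i))"
    proof
      fix i assume i: "i \<in> {1..n+1}"
      show "?idx i < ?idx (Suc i) \<and> Q (?idx i) (?idx (Suc i))"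
      proof (cases "i = 1")
        case True then show ?thesis using H k' by auto
      next
        case False
        then have "i - 1 \<in> {1..n}" "Suc (i - 1) = i" using i by auto
        then have "idx (i-1) < idx (Suc (i-1)) \<and> Q (idx (i-1)) (idx (Suc (i-1)))" using H(3) by blast
        then show ?thesis using False i \<open>Suc (i - 1) = i\<close> by auto
      qed
    qed
    moreover have "S (?idx (n+1)) \<le> B" "S (?idx (Suc (n+1))) > B" using H by auto
    ultimately show ?thesis by (intro exI[of _ "n+1"] exI[of _ ?idx]) auto
  qed
qed

lemma numeric:
  assumes "0 < p" "p < 1/10"
  shows "sqrt (qpar p) > 0 \<and> Apar p \<ge> 1 \<and> Bpar p \<ge> Apar p + 1"
proof -
  have "ln (1 - p) < 0" using assms by (intro ln_less_zero) auto
  then have q0: "qpar p > 0" by (simp add: qpar_def)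
  have "qpar p = ln (1 / (1 - p))" using assms unfolding qpar_def by (subst ln_div) auto
  also have "\<dots> \<le> 1 / (1 - p) - 1" using assms by (intro ln_le_minus_one) simp
  also have "\<dots> = p / (1 - p)" using assms by (simp add: field_simps)
  also have "\<dots> < 1/9" using assms by (simp add: field_simps)
  finally have q9: "qpar p < 1/9" .
  define u where "u = 1 / qpar p"
  have u9: "u > 9" using q0 q9 unfolding u_def by (simp add: field_simps)
  have lnu: "ln u \<ge> 1"
  proof -
    have "exp 1 \<le> u" using exp_le u9 by linarith
    then show ?thesis using u9 ln_ge_iff[of u 1] by simp
  qed
  have s3: "sqrt u \<ge> 3" by (rule real_le_rsqrt) (use u9 in simp)
  have su: "3 * sqrt u \<le> u"
  proof -
    have "3 * sqrt u \<le> sqrt u * sqrt u" using s3 u9 by (intro mult_right_mono) auto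
    also have "\<dots> = u" using u9 by simp
    finally show ?thesis .
  qed
  have X: "u * ln u \<ge> u" using lnu u9 by simp
  have A: "Apar p = \<lceil>sqrt u\<rceil>" unfolding Apar_def u_def by (simp add: real_sqrt_divide)
  have B: "Bpar p = \<lfloor>u * ln u\<rfloor>" unfolding Bpar_def u_def by simp
  have "real_of_int \<lceil>sqrt u\<rceil> < sqrt u + 1" by linarith
  moreover have "real_of_int \<lfloor>u * ln u\<rfloor> > u * ln u - 1" by linarith
  ultimately have "real_of_int (Bpar p) - real_of_int (Apar p) > 0" using A B X su u9 by linarith
  then have "Bpar p \<ge> Apar p + 1" by linarith
  moreover have "Apar p \<ge> 1" using A s3 by linarith
  moreover have "sqrt (qpar p) > 0" using q0 by simp
  ultimately show ?thesis by simp
qed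

theorem lemma4:
  fixes p :: real and \<sigma> :: config
  assumes "0 < p" "p < 1/10"
    and "\<sigma> (0,0) = Active \<or> \<sigma> (0,0) = Empty"
    and "\<forall>x. x \<noteq> (0,0) \<longrightarrow> \<sigma> x = Occupied \<or> \<sigma> x = Empty"
    and "indefinite_growth \<sigma>"
  shows "Eev p \<sigma> \<or>
    (\<exists>n R. good_seq p n R \<and> Gev \<sigma> (R 1) \<and> (\<forall>i\<in>{1..n}. Dev \<sigma> (R i) (R (Suc i))))"
proof -
  have na: "\<forall>x. x \<noteq> (0,0) \<longrightarrow> \<sigma> x \<noteq> Active"
  proof (intro allI impI)
    fix x :: site assume "x \<noteq> (0,0)"
    then have "\<sigma> x = Occupied \<or> \<sigma> x = Empty" using assms(4) by blast
    then show "\<sigma> x \<noteq> Active" by auto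
  qed
  have o: "\<sigma> (0,0) \<noteq> Empty"
  proof
    assume e: "\<sigma> (0,0) = Empty"
    have noact: "\<forall>x. \<sigma> x \<noteq> Active"
    proof
      fix x :: site show "\<sigma> x \<noteq> Active"
      proof (cases "x = (0,0)")
        case True then show ?thesis using e by simp
      next
        case False then show ?thesis using na by blast
      qed
    qed
    have st: "step \<sigma> = \<sigma>"
    proof
      fix x
      have E1: "{y. l1dist x y \<le> 1 \<and> \<sigma> y = Active} = {}" and E2: "\<not>(\<exists>y. l1dist x y \<le> 2 \<and> \<sigma> y = Active)"
        using noact by auto
      show "step \<sigma> x = \<sigma> x" unfolding step_def E1 using E2 by (cases "\<sigma> x") auto
    qed
    have "evolve \<sigma> t = \<sigma>" for t
      by (induction t) (simp_all add: evolve_def st)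
    then show False using assms(5) noact by (auto simp: indefinite_growth_def)
  qed
  define C where "C = chain \<sigma>"
  have CP: "is_rect (C j) \<and> (0,0) \<in> rect_set (C j) \<and> move \<sigma> (C j) (C (Suc j))" for j
    using chain_props[OF assms(5) na] C_def by simp
  have MP: "rect_set (C j) \<subseteq> rect_set (C (Suc j)) \<and> width (C (Suc j)) - width (C j) \<in> {0,1} \<and>
     height (C (Suc j)) - height (C j) \<in> {0,1} \<and>
     width (C (Suc j)) + height (C (Suc j)) > width (C j) + height (C j)" for j
    using move_props CP by blast
  define a where "a j = width (C j)" for j
  define b where "b j = height (C j)" for j
  have a0: "a 0 = 1" "b 0 = 1" by (simp_all add: a_def b_def C_def width_def height_def)
  have sta: "\<forall>j. a (Suc j) - a j \<in> {0,1}" unfolding a_def using MP by simp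
  have stb: "\<forall>j. b (Suc j) - b j \<in> {0,1}" unfolding b_def using MP by simp
  have sts: "a (Suc j) + b (Suc j) > a j + b j" for j unfolding a_def b_def using MP by simp
  have apos: "a j \<ge> 1" for j using steps_mono[OF sta, of 0 j] a0 by simp
  have bpos: "b j \<ge> 1" for j using steps_mono[OF stb, of 0 j] a0 by simp
  have sumN: "a (k+N) + b (k+N) \<ge> a k + b k + int N" for k N
  proof (induction N)
    case 0 then show ?case by simp
  next
    case (Suc N) then show ?case using sts[of "k+N"] by simp
  qed
  have cont: "rect_set (C j) \<subseteq> rect_set (C m)" if "j \<le> m" for j m
    using that
  proof (induction m rule: dec_induct)
    case base then show ?case by simp
  next
    case (step n) then show ?case using MP[of n] by blast
  qed
  have cinv: "inv_all \<sigma> (C j) (C m)" if "j \<le> m" for j m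
    using that
  proof (induction m rule: dec_induct)
    case base then show ?case by (rule inv_refl)
  next
    case (step n) then show ?case using inv_step CP[of n] by blast
  qed
  have G: "Gev \<sigma> (C j)" for j
    using inv_Gev[of \<sigma> "C j"] cinv[of 0 j] CP[of j] o by (simp add: C_def)
  define mx where "mx j = max (a j) (b j)" for j
  define mn where "mn j = min (a j) (b j)" for j
  have stmx: "\<forall>j. mx (Suc j) - mx j \<in> {0,1}"
  proof
    fix j
    have "a (Suc j) = a j \<or> a (Suc j) = a j + 1" "b (Suc j) = b j \<or> b (Suc j) = b j + 1"
      using sta stb by (auto simp: algebra_simps)
    then show "mx (Suc j) - mx j \<in> {0,1}" unfolding mx_def by (auto simp: max_def)
  qed
  have stmn: "\<forall>j. mn (Suc j) - mn j \<in> {0,1}"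
  proof
    fix j
    have "a (Suc j) = a j \<or> a (Suc j) = a j + 1" "b (Suc j) = b j \<or> b (Suc j) = b j + 1"
      using sta stb by (auto simp: algebra_simps)
    then show "mn (Suc j) - mn j \<in> {0,1}" unfolding mn_def by (auto simp: min_def)
  qed
  have mx0: "mx 0 = 1" "mn 0 = 1" using a0 by (simp_all add: mx_def mn_def)
  obtain th where th: "th = sqrt (qpar p)" "th > 0" using numeric[OF assms(1,2)] by blast
  define A where "A = Apar p"
  define B where "B = Bpar p"
  have AB: "A \<ge> 1" "B \<ge> A + 1" using numeric[OF assms(1,2)] A_def B_def by auto
  show ?thesis
  proof (cases "\<exists>j. mx j = B - A \<and> mn j \<le> A")
    case True
    then obtain j where j: "mx j = B - A" "mn j \<le> A" by blast
    have "Eev p \<sigma>"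
      unfolding Eev_def
    proof (intro exI[of _ "C j"] conjI)
      show "is_rect (C j)" "(0,0) \<in> rect_set (C j)" using CP by auto
      show "Gev \<sigma> (C j)" by (rule G)
      show "(width (C j) \<in> {Bpar p - Apar p - 10..Bpar p - Apar p} \<and> height (C j) \<in> {1..Apar p}) \<or>
        (height (C j) \<in> {Bpar p - Apar p - 10..Bpar p - Apar p} \<and> width (C j) \<in> {1..Apar p})"
        using j apos[of j] bpos[of j] unfolding A_def B_def mx_def mn_def a_def b_def
        by (auto simp: max_def min_def split: if_splits)
    qed
    then show ?thesis by blast
  next
    case False
    have "mx (nat (2*(B-A))) \<ge> B - A"
      using sumN[of 0 "nat (2*(B-A))"] a0 AB unfolding mx_def by (simp add: max_def)
    then obtain j1 where j1: "mx j1 = B - A" using ivt[OF stmx, of "B-A"] mx0 AB by auto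
    then have mnj1: "mn j1 > A" using False by auto
    obtain j0 where j0: "j0 \<le> j1" "mn j0 = A" using ivt[OF stmn, of A j1] mx0 AB mnj1 by auto
    have "mx j0 \<le> mx j1" using steps_mono[OF stmx j0(1)] .
    then have S0: "a j0 + b j0 \<le> B" using j0 j1 unfolding mx_def mn_def by (auto simp: max_def min_def split: if_splits)
    define Q where "Q k k' \<longleftrightarrow> (let a = real_of_int (width (C k)); b = real_of_int (height (C k));
            s = real_of_int (width (C k') - width (C k));
            t = real_of_int (height (C k') - height (C k)) in
        (s \<ge> a * sqrt (qpar p) \<or> t \<ge> b * sqrt (qpar p)) \<and>
        s < a * sqrt (qpar p) + 4 \<and> t < b * sqrt (qpar p) + 4)" for k k'
    define S where "S k = a k + b k" for k
    have stepQ: "\<exists>k'>k. Q k k' \<and> S k < S k'" for k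
    proof -
      define P where "P j \<longleftrightarrow> real_of_int (a j - a k) \<ge> a k * th \<or> real_of_int (b j - b k) \<ge> b k * th" for j
      define N where "N = nat \<lceil>(a k + b k) * th\<rceil> + 1"
      have "P (k + N)"
      proof (rule ccontr)
        assume "\<not> P (k + N)"
        then have "real_of_int (a (k+N) - a k) + real_of_int (b (k+N) - b k) < (a k + b k) * th"
          unfolding P_def by (simp add: algebra_simps)
        moreover have "real_of_int (a (k+N) - a k) + real_of_int (b (k+N) - b k) \<ge> real N"
          using sumN[of k N] by simp
        moreover have "real N \<ge> (a k + b k) * th + 1" unfolding N_def by linarith
        ultimately show False by linarith
      qed
      define k' where "k' = (LEAST j. P j)"
      have Pk': "P k'" using LeastI[of P, OF \<open>P (k+N)\<close>] k'_def by simp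
      have nP: "\<not> P j" if "j \<le> k" for j
      proof -
        have "a j \<le> a k" "b j \<le> b k" using steps_mono[OF sta that] steps_mono[OF stb that] by auto
        moreover have "a k * th > 0" "b k * th > 0" using apos[of k] bpos[of k] th(2) by (auto intro!: mult_pos_pos)
        ultimately show ?thesis unfolding P_def by auto
      qed
      have kk: "k < k'" using nP Pk' by (meson not_le)
      have "\<not> P (k' - 1)" using not_less_Least[of "k'-1" P] kk k'_def by simp
      moreover have "a k' - a (k'-1) \<le> 1" "b k' - b (k'-1) \<le> 1"
        using sta[rule_format, of "k'-1"] stb[rule_format, of "k'-1"] kk by auto
      ultimately have "Q k k'" using Pk' th unfolding P_def Q_def a_def b_def Let_def by auto
      moreover have "S k < S k'"
        using sumN[of k "k' - k"] kk unfolding S_def by simp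
      ultimately show ?thesis using kk by blast
    qed
    obtain n idx where gr: "n \<ge> 1" "idx (1::nat) = j0"
      "\<forall>i\<in>{1..n}. idx i < idx (Suc i) \<and> Q (idx i) (idx (Suc i))"
      "S (idx n) \<le> B" "S (idx (Suc n)) > B"
      using greedy[of S B Q, OF stepQ, of j0] S0 unfolding S_def by blast
    define R where "R i = C (idx i)" for i
    have "good_seq p n R"
      unfolding good_seq_def
    proof (intro conjI)
      show "1 \<le> n" by (rule gr(1))
      show "\<forall>i\<in>{1..n + 1}. is_rect (R i)" using CP R_def by auto
      show "(0, 0) \<in> rect_set (R 1)" using CP R_def by auto
      show "\<forall>i\<in>{1..n}. rect_set (R i) \<subseteq> rect_set (R (Suc i))"
      proof
        fix i assume "i \<in> {1..n}"
        then have "idx i \<le> idx (Suc i)" using gr(3) by (simp add: less_imp_le)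
        then show "rect_set (R i) \<subseteq> rect_set (R (Suc i))" unfolding R_def by (rule cont)
      qed
      show "min (width (R 1)) (height (R 1)) \<in> {Apar p..Apar p + 3}"
        using j0 gr(2) unfolding R_def mn_def a_def b_def A_def by simp
      show "width (R n) + height (R n) \<le> Bpar p" using gr(4) unfolding R_def S_def a_def b_def B_def by simp
      show "width (R (Suc n)) + height (R (Suc n)) > Bpar p" using gr(5) unfolding R_def S_def a_def b_def B_def by simp
      show "\<forall>i\<in>{1..n}.
        let a = real_of_int (width (R i)); b = real_of_int (height (R i));
            s = real_of_int (width (R (Suc i)) - width (R i));
            t = real_of_int (height (R (Suc i)) - height (R i)) in
        (s \<ge> a * sqrt (qpar p) \<or> t \<ge> b * sqrt (qpar p)) \<and>
        s < a * sqrt (qpar p) + 4 \<and> t < b * sqrt (qpar p) + 4"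
        using gr(3) unfolding R_def Q_def by blast
    qed
    moreover have "Gev \<sigma> (R 1)" using G R_def by simp
    moreover have "\<forall>i\<in>{1..n}. Dev \<sigma> (R i) (R (Suc i))"
    proof
      fix i assume "i \<in> {1..n}"
      then have "idx i \<le> idx (Suc i)" using gr(3) by (simp add: less_imp_le)
      then show "Dev \<sigma> (R i) (R (Suc i))" unfolding R_def by (intro inv_Dev cinv)
    qed
    ultimately show ?thesis by blast
  qed
qed

end
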